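(* Let $n\in\mathbb{N}$ and let $\varphi$ be a formula of $\mathbf{CPN}_n$ (built only from propositional letters, the constants $\perp_c$, $\perp_{(n)}$, $\top_{(n)}$, the negations $\neg_c$ and $\to_{(n)}$). Regard $\varphi$ as a formula of $\mathbf{CPN}_{n+1}$ by reading every chain over $[n]$ as a chain over $[n+1]$ (so $\perp_{(n)}$ becomes $\perp_{\{1,\dots,n\}}$ and $\neg_{(n)}$ becomes the weak negation $\neg_{\{1,\dots,n\}}$ of $\mathbf{CPN}_{n+1}$), replacing $\to_{(n)}$ by $\to_{(n+1)}$ and $\top_{(n)}$ by $\top_{(n+1)}$. If $\vdash_{(n+1)}\varphi$, then $\vdash_{(n)}\varphi$.
   Context: For each $m\ge 1$, write $[m]=\{1,\dots,m\}$. Chains: a chain over $[m]$ is a finite sequence of distinct elements of $[m]$; chains with the same length and the same symbols are identified, so a chain is effectively a subset of $[m]$; $\epsilon$ is the empty chain and $(m)$ the chain of all symbols of $[m]$. For chains $c,d$: the coconcatenation $c\otimes d$ is the chain of symbols occurring in exactly one of $c,d$; $d$ is a subchain of $c$ if every symbol of $d$ is a symbol of $c$. Language of $\mathbf{CPN}_m$: a countable set of propositional letters (the same for all $m$); constants $\perp_c$ for each chain $c$ over $[m]$ with $1\le|c|\le m-1$, and constants $\perp_{(m)}$ and $\top_{(m)}$; a unary connective $\neg_c$ for each nonempty chain $c$ over $[m]$; a binary connective $\to_{(m)}$. Formulas are built as usual. Conventions: $\neg_\epsilon\varphi:=\varphi$, $\perp_\epsilon:=\top_{(m)}$, and $\perp_c$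 for $c=(m)$ means $\perp_{(m)}$. Abbreviations: $\varphi\wedge_{(m)}\psi:=\neg_{(m)}(\varphi\to_{(m)}\neg_{(m)}\psi)$, $\varphi\leftrightarrow_{(m)}\psi:=(\varphi\to_{(m)}\psi)\wedge_{(m)}(\psi\to_{(m)}\varphi)$. Axioms of $\mathbf{CPN}_m$, for all formulas $\varphi,\psi,\chi$ and all nonempty chains $c_k,c_r$ over $[m]$: (A1) $\varphi\to_{(m)}(\psi\to_{(m)}\varphi)$; (A2) $(\varphi\to_{(m)}(\psi\to_{(m)}\chi))\to_{(m)}((\varphi\to_{(m)}\psi)\to_{(m)}(\varphi\to_{(m)}\chi))$; (A3) $(\neg_{(m)}\psi\to_{(m)}\neg_{(m)}\varphi)\to_{(m)}((\neg_{(m)}\psi\to_{(m)}\varphi)\to_{(m)}\psi)$; (A4) $\varphi\to_{(m)}(\perp_{c_k}\to_{(m)}\neg_{c_k}\varphi)$; (A5) $\neg_{c_k}\neg_{c_r}\varphi\leftrightarrow_{(m)}\neg_{c_k\otimes c_r}\varphi$; (A6) $\neg_{c_k}\perp_{c_r}\leftrightarrow_{(m)}\perp_{c_k\otimes c_r}$; (A7) $\perp_{c_k}\to_{(m)}\perp_{c_r}$, whenever $c_r$ is a subchain of $c_k$. The only rule is modus ponens for $\to_{(m)}$; $\vdash_{(m)}\varphi$ means $\varphi$ has a derivation from these axioms by modus ponens. *)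

theory Defs
  imports Main
begin

text \<open>Chains over [m] are identified with subsets of {1..m}.  Formulas are
represented level-independently: the chain index of a constant or negation is a
set of naturals, and Top / Imp stand for the top constant and implication of
whatever CPN_m the formula is considered in.\<close>

datatype form =
    PVar nat
  | Bot "nat set"
  | Top
  | Neg "nat set" form
  | Imp form form

type_synonym chain = "nat set"

definition chain_over :: "nat \<Rightarrow> chain \<Rightarrow> bool" where
  "chain_over m c \<longleftrightarrow> c \<subseteq> {1..m}"

definition full_chain :: "nat \<Rightarrow> chain" where
  "full_chain m = {1..m}"

definition coconc :: "chain \<Rightarrow> chain \<Rightarrow> chain" where
  "coconc c d = (c - d) \<union> (d - c)"

fun wf :: "nat \<Rightarrow> form \<Rightarrow> bool" where
  "wf m (PVar p) = True"
| "wf m (Bot c) = (chain_over m c \<and> c \<noteq> {})"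
| "wf m Top = True"
| "wf m (Neg c f) = (chain_over m c \<and> c \<noteq> {} \<and> wf m f)"
| "wf m (Imp f g) = (wf m f \<and> wf m g)"

definition negc :: "chain \<Rightarrow> form \<Rightarrow> form" where
  "negc c f = (if c = {} then f else Neg c f)"

definition botc :: "chain \<Rightarrow> form" where
  "botc c = (if c = {} then Top else Bot c)"

definition conj :: "nat \<Rightarrow> form \<Rightarrow> form \<Rightarrow> form" where
  "conj m f g = Neg (full_chain m) (Imp f (Neg (full_chain m) g))"

definition iff :: "nat \<Rightarrow> form \<Rightarrow> form \<Rightarrow> form" where
  "iff m f g = conj m (Imp f g) (Imp g f)"

inductive prov :: "nat \<Rightarrow> form \<Rightarrow> bool" for m :: nat where
  A1: "\<lbrakk>wf m f; wf m g\<rbrakk> \<Longrightarrow> prov m (Imp f (Imp g f))"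
| A2: "\<lbrakk>wf m f; wf m g; wf m h\<rbrakk> \<Longrightarrow>
        prov m (Imp (Imp f (Imp g h)) (Imp (Imp f g) (Imp f h)))"
| A3: "\<lbrakk>wf m f; wf m g\<rbrakk> \<Longrightarrow>
        prov m (Imp (Imp (Neg (full_chain m) g) (Neg (full_chain m) f))
                    (Imp (Imp (Neg (full_chain m) g) f) g))"
| A4: "\<lbrakk>wf m f; chain_over m ck; ck \<noteq> {}\<rbrakk> \<Longrightarrow>
        prov m (Imp f (Imp (Bot ck) (Neg ck f)))"
| A5: "\<lbrakk>wf m f; chain_over m ck; ck \<noteq> {}; chain_over m cr; cr \<noteq> {}\<rbrakk> \<Longrightarrow>
        prov m (iff m (Neg ck (Neg cr f)) (negc (coconc ck cr) f))"
| A6: "\<lbrakk>chain_over m ck; ck \<noteq> {}; chain_over m cr; cr \<noteq> {}\<rbrakk> \<Longrightarrow>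
        prov m (iff m (Neg ck (Bot cr)) (botc (coconc ck cr)))"
| A7: "\<lbrakk>chain_over m ck; ck \<noteq> {}; chain_over m cr; cr \<noteq> {}; cr \<subseteq> ck\<rbrakk> \<Longrightarrow>
        prov m (Imp (Bot ck) (Bot cr))"
| MP: "\<lbrakk>prov m (Imp f g); prov m f\<rbrakk> \<Longrightarrow> prov m g"

text \<open>Embedding of CPN_n formulas into CPN_(n+1): chains over [n] are read as
chains over [n+1]; Top and Imp of level n become those of level n+1.  In this
level-independent representation this is the identity on syntax.\<close>
definition embed :: "form \<Rightarrow> form" where
  "embed f = f"

end

theory Submission
  imports Defs
begin

lemma coconc_self[simp]: "coconc c c = {}" by (auto simp: coconc_def)

abbreviation nn :: "nat \<Rightarrow> form \<Rightarrow> form" where "nn m f \<equiv> Neg (full_chain m) f"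

lemma co_full[simp]: "chain_over m (full_chain m)"
  by (auto simp: chain_over_def full_chain_def)

lemma full_empty[simp]: "(full_chain m = {}) = (m = 0)"
  by (auto simp: full_chain_def)

lemma wf_nn: "1 \<le> m \<Longrightarrow> wf m (nn m f) = wf m f"
  by (auto simp: chain_over_def full_chain_def)

lemma full_props: "1 \<le> m \<Longrightarrow> chain_over m (full_chain m)" "1 \<le> m \<Longrightarrow> full_chain m \<noteq> {}"
  by (auto simp: chain_over_def full_chain_def)

lemma co_coconc: "chain_over m a \<Longrightarrow> chain_over m b \<Longrightarrow> chain_over m (coconc a b)"
  by (auto simp: chain_over_def coconc_def)

lemma wf_negc: "chain_over m c \<Longrightarrow> wf m f \<Longrightarrow> wf m (negc c f)"
  by (auto simp: negc_def)

lemma wf_botc: "chain_over m c \<Longrightarrow> wf m (botc c)"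
  by (auto simp: botc_def)

lemma wf_conj[simp]: "1 \<le> m \<Longrightarrow> wf m (conj m a b) = (wf m a \<and> wf m b)"
  by (auto simp: conj_def)

lemma wf_iff[simp]: "1 \<le> m \<Longrightarrow> wf m (iff m a b) = (wf m a \<and> wf m b)"
  by (auto simp: iff_def)

lemma prov_wf: "prov m f \<Longrightarrow> 1 \<le> m \<Longrightarrow> wf m f"
  by (induction rule: prov.induct)
     (auto intro!: wf_negc wf_botc co_coconc)

lemma imp_refl: "wf m a \<Longrightarrow> prov m (Imp a a)"
proof -
  assume a: "wf m a"
  have 1: "prov m (Imp (Imp a (Imp (Imp a a) a)) (Imp (Imp a (Imp a a)) (Imp a a)))"
    using a by (intro A2) auto
  have 2: "prov m (Imp a (Imp (Imp a a) a))" using a by (intro A1) auto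
  have 3: "prov m (Imp a (Imp a a))" using a by (intro A1) auto
  show ?thesis using MP[OF MP[OF 1 2] 3] .
qed

inductive der :: "nat \<Rightarrow> form set \<Rightarrow> form \<Rightarrow> bool" for m where
  dH: "f \<in> G \<Longrightarrow> der m G f"
| dP: "prov m f \<Longrightarrow> der m G f"
| dM: "der m G (Imp f g) \<Longrightarrow> der m G f \<Longrightarrow> der m G g"

lemma der_wf: "der m G f \<Longrightarrow> 1 \<le> m \<Longrightarrow> (\<forall>x\<in>G. wf m x) \<Longrightarrow> wf m f"
  by (induction rule: der.induct) (auto dest: prov_wf)

lemma deduction:
  assumes m: "1 \<le> m" and d: "der m (insert a G) b" and wa: "wf m a" and wG: "\<forall>x\<in>G. wf m x"
  shows "der m G (Imp a b)"
  using d
proof (induction "insert a G" b rule: der.induct)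
  case (dH f)
  show ?case
  proof (cases "f = a")
    case True thus ?thesis using imp_refl[OF wa] by (auto intro: dP)
  next
    case False
    hence "f \<in> G" using dH by auto
    hence wf: "wf m f" using wG by auto
    show ?thesis by (rule dM[OF dP[OF A1[OF wf wa]] der.dH[OF \<open>f \<in> G\<close>]])
  qed
next
  case (dP f)
  have wf: "wf m f" using prov_wf[OF dP m] .
  show ?case by (rule dM[OF der.dP[OF A1[OF wf wa]] der.dP[OF dP]])
next
  case (dM f g)
  have wG': "\<forall>x\<in>insert a G. wf m x" using wa wG by auto
  have "wf m (Imp f g)" using der_wf[OF dM(1) m wG'] .
  hence wf: "wf m f" "wf m g" by auto
  show ?case by (rule der.dM[OF der.dM[OF der.dP[OF A2[OF wa wf]] dM(2)] dM(4)])
qed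

lemma der_prov: "der m {} f \<Longrightarrow> prov m f"
  by (induction "{}::form set" f rule: der.induct) (auto intro: MP)

lemma ded1: "1 \<le> m \<Longrightarrow> der m {a} b \<Longrightarrow> wf m a \<Longrightarrow> prov m (Imp a b)"
  using deduction[of m a "{}" b] der_prov by auto

context
  fixes m :: nat
  assumes m: "1 \<le> m"
begin

lemma m0[simp]: "0 < m" "m \<noteq> 0" using m by auto

lemma dne: "wf m B \<Longrightarrow> prov m (Imp (nn m (nn m B)) B)"
proof -
  assume w: "wf m B"
  let ?G = "{nn m (nn m B)}"
  have 1: "der m ?G (Imp (nn m B) (nn m (nn m B)))"
    by (rule dM[OF dP[OF A1] dH]) (auto simp: m w)
  have 2: "der m ?G (Imp (nn m B) (nn m B))" by (rule dP[OF imp_refl]) (simp add: m w)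
  have 3: "der m ?G (Imp (Imp (nn m B) (nn m (nn m B))) (Imp (Imp (nn m B) (nn m B)) B))"
    by (rule dP[OF A3]) (auto simp: m w)
  have "der m ?G B" using dM[OF dM[OF 3 1] 2] .
  thus ?thesis using ded1[OF m] m w by auto
qed

lemma exfalso: "wf m A \<Longrightarrow> wf m C \<Longrightarrow> prov m (Imp (nn m A) (Imp A C))"
proof -
  assume wA: "wf m A" and wC: "wf m C"
  let ?G = "insert A {nn m A}"
  have 1: "der m ?G (Imp (nn m C) (nn m A))"
    by (rule dM[OF dP[OF A1] dH]) (auto simp: m wA wC)
  have 2: "der m ?G (Imp (nn m C) A)"
    by (rule dM[OF dP[OF A1] dH]) (auto simp: m wA wC)
  have 3: "der m ?G (Imp (Imp (nn m C) (nn m A)) (Imp (Imp (nn m C) A) C))"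
    by (rule dP[OF A3]) (auto simp: m wA wC)
  have "der m ?G C" using dM[OF dM[OF 3 1] 2] .
  hence "der m {nn m A} (Imp A C)" using deduction[OF m] m wA by auto
  thus ?thesis using ded1[OF m] m wA by auto
qed

lemma conjE1: "wf m A \<Longrightarrow> wf m B \<Longrightarrow> prov m (conj m A B) \<Longrightarrow> prov m A"
proof -
  assume wA: "wf m A" and wB: "wf m B" and c: "prov m (conj m A B)"
  have 3: "prov m (Imp (Imp (nn m A) (nn m (Imp A (nn m B)))) (Imp (Imp (nn m A) (Imp A (nn m B))) A))"
    by (rule A3) (auto simp: m wA wB)
  have 1: "prov m (Imp (nn m A) (nn m (Imp A (nn m B))))"
    by (rule MP[OF A1 c[unfolded conj_def]]) (auto simp: m wA wB)
  have 2: "prov m (Imp (nn m A) (Imp A (nn m B)))" by (rule exfalso) (auto simp: m wA wB)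
  show ?thesis using MP[OF MP[OF 3 1] 2] .
qed

lemma conjE2: "wf m A \<Longrightarrow> wf m B \<Longrightarrow> prov m (conj m A B) \<Longrightarrow> prov m B"
proof -
  assume wA: "wf m A" and wB: "wf m B" and c: "prov m (conj m A B)"
  have 3: "prov m (Imp (Imp (nn m B) (nn m (Imp A (nn m B)))) (Imp (Imp (nn m B) (Imp A (nn m B))) B))"
    by (rule A3) (auto simp: m wA wB)
  have 1: "prov m (Imp (nn m B) (nn m (Imp A (nn m B))))"
    by (rule MP[OF A1 c[unfolded conj_def]]) (auto simp: m wA wB)
  have 2: "prov m (Imp (nn m B) (Imp A (nn m B)))" by (rule A1) (auto simp: m wA wB)
  show ?thesis using MP[OF MP[OF 3 1] 2] .
qed

lemma conjI': "wf m A \<Longrightarrow> wf m B \<Longrightarrow> prov m A \<Longrightarrow> prov m B \<Longrightarrow> prov m (conj m A B)"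
proof -
  assume wA: "wf m A" and wB: "wf m B" and pA: "prov m A" and pB: "prov m B"
  define D where "D = Imp A (nn m B)"
  have wD: "wf m D" using wA wB m by (simp add: D_def)
  have 3: "prov m (Imp (Imp (nn m (nn m D)) (nn m B)) (Imp (Imp (nn m (nn m D)) B) (nn m D)))"
    by (rule A3) (auto simp: m wD wB)
  let ?G = "{nn m (nn m D)}"
  have "der m ?G D" by (rule dM[OF dP[OF dne[OF wD]] dH]) simp
  hence "der m ?G (nn m B)" unfolding D_def using dM dP[OF pA] by blast
  hence 1: "prov m (Imp (nn m (nn m D)) (nn m B))" using ded1[OF m] m wD by auto
  have 2: "prov m (Imp (nn m (nn m D)) B)" by (rule MP[OF A1 pB]) (auto simp: m wD wB)
  show ?thesis using MP[OF MP[OF 3 1] 2] by (simp add: conj_def D_def)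
qed

lemma syl: "wf m a \<Longrightarrow> prov m (Imp a b) \<Longrightarrow> prov m (Imp b c) \<Longrightarrow> prov m (Imp a c)"
proof -
  assume wa: "wf m a" and 1: "prov m (Imp a b)" and 2: "prov m (Imp b c)"
  have "der m {a} c" using dM[OF dP[OF 2] dM[OF dP[OF 1] dH]] by simp
  thus ?thesis using ded1[OF m] wa by auto
qed

lemma iffI': "prov m (Imp a b) \<Longrightarrow> prov m (Imp b a) \<Longrightarrow> prov m (iff m a b)"
  unfolding iff_def using conjI' prov_wf[OF _ m] by blast

lemma iffD: "prov m (iff m a b) \<Longrightarrow> prov m (Imp a b) \<and> prov m (Imp b a)"
proof -
  assume p: "prov m (iff m a b)"
  have "wf m (iff m a b)" using prov_wf[OF p m] .
  hence w: "wf m (Imp a b)" "wf m (Imp b a)" using m by auto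
  show ?thesis using conjE1[OF w] conjE2[OF w] p unfolding iff_def by auto
qed

lemma iff_refl: "wf m a \<Longrightarrow> prov m (iff m a a)"
  using iffI' imp_refl by blast

lemma iff_trans: "prov m (iff m a b) \<Longrightarrow> prov m (iff m b c) \<Longrightarrow> prov m (iff m a c)"
proof -
  assume 1: "prov m (iff m a b)" and 2: "prov m (iff m b c)"
  have w: "wf m a" "wf m b" "wf m c" using prov_wf[OF 1 m] prov_wf[OF 2 m] m by auto
  show ?thesis using iffD[OF 1] iffD[OF 2] syl w iffI' by meson
qed

lemma iff_prov: "prov m a \<Longrightarrow> prov m b \<Longrightarrow> prov m (iff m a b)"
  using iffI' A1 prov_wf[OF _ m] MP by meson

lemma not_bot: "prov m (nn m (Bot (full_chain m)))"
proof -
  let ?B = "Bot (full_chain m)"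
  have wB: "wf m ?B" using full_props[OF m] by simp
  let ?G = "{nn m (nn m ?B)}"
  have b: "der m ?G ?B" by (rule dM[OF dP[OF dne[OF wB]] dH]) simp
  have a4: "prov m (Imp ?B (Imp ?B (nn m ?B)))" by (rule A4) (auto simp: wB full_props m)
  have "der m ?G (nn m ?B)" using dM[OF dM[OF dP[OF a4] b] b] .
  hence 1: "prov m (Imp (nn m (nn m ?B)) (nn m ?B))" using ded1[OF m] m wB by auto
  have 3: "prov m (Imp (Imp (nn m (nn m ?B)) (nn m ?B)) (Imp (Imp (nn m (nn m ?B)) ?B) (nn m ?B)))"
    by (rule A3) (auto simp: m wB)
  show ?thesis using MP[OF MP[OF 3 1] dne[OF wB]] .
qed


lemma prov_top: "prov m Top"
proof -
  have "prov m (iff m (nn m (Bot (full_chain m))) (botc (coconc (full_chain m) (full_chain m))))"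
    by (rule A6) (auto simp: full_props m)
  hence "prov m (Imp (nn m (Bot (full_chain m))) Top)" using iffD by (simp add: botc_def)
  thus ?thesis using MP not_bot by blast
qed

lemma neg_bot_self: "chain_over m c \<Longrightarrow> c \<noteq> {} \<Longrightarrow> prov m (Neg c (Bot c))"
proof -
  assume c: "chain_over m c" "c \<noteq> {}"
  have "prov m (iff m (Neg c (Bot c)) (botc (coconc c c)))" by (rule A6) (use c in auto)
  hence "prov m (Imp Top (Neg c (Bot c)))" using iffD by (simp add: botc_def)
  thus ?thesis using MP prov_top by blast
qed

end


abbreviation Y :: "nat \<Rightarrow> form" where "Y n \<equiv> nn n (Bot (full_chain n))"

fun tr :: "nat \<Rightarrow> form \<Rightarrow> form" where
  "tr n (PVar p) = PVar p"
| "tr n (Bot c) = (if c - {Suc n} = {} then Y n else Bot (c - {Suc n}))"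
| "tr n Top = Top"
| "tr n (Neg c f) = negc (c - {Suc n}) (tr n f)"
| "tr n (Imp f g) = Imp (tr n f) (tr n g)"

lemma tr_id: "wf n f \<Longrightarrow> tr n f = f"
proof (induction f)
  case (Bot c)
  hence "c - {Suc n} = c" by (auto simp: chain_over_def)
  thus ?case using Bot by auto
next
  case (Neg c f)
  hence "c - {Suc n} = c" by (auto simp: chain_over_def)
  thus ?case using Neg by (auto simp: negc_def)
qed auto

lemma co_diff: "chain_over (Suc n) c \<Longrightarrow> chain_over n (c - {Suc n})"
  by (auto simp: chain_over_def)

lemma tr_wf: "wf (Suc n) f \<Longrightarrow> 1 \<le> n \<Longrightarrow> wf n (tr n f)"
  by (induction f) (auto simp: co_diff intro!: wf_negc)

lemma full_diff[simp]: "full_chain (Suc n) - {Suc n} = full_chain n"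
  by (auto simp: full_chain_def)

lemma negc_full: "1 \<le> n \<Longrightarrow> negc (full_chain n) f = nn n f"
  by (auto simp: negc_def)

lemma tr_negc: "tr n (negc c f) = negc (c - {Suc n}) (tr n f)"
  by (auto simp: negc_def)

lemma tr_iff: "1 \<le> n \<Longrightarrow> tr n (iff (Suc n) a b) = iff n (tr n a) (tr n b)"
  by (simp add: iff_def conj_def negc_full)

lemma tr_botc: "tr n (botc c) = (if c = {} then Top else tr n (Bot c))"
  by (simp add: botc_def)

lemma coconc_diff: "coconc a b - {x} = coconc (a - {x}) (b - {x})"
  by (auto simp: coconc_def)

lemma coconc_empty: "coconc a b = {} \<longleftrightarrow> a = b"
  by (auto simp: coconc_def)

lemma coconc_e[simp]: "coconc {} b = b" "coconc a {} = a"
  by (auto simp: coconc_def)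

lemma coconc_cancel: "coconc (coconc a f) f = a"
  by (auto simp: coconc_def)

lemma A5': "1 \<le> n \<Longrightarrow> chain_over n a \<Longrightarrow> chain_over n b \<Longrightarrow> wf n x \<Longrightarrow>
  prov n (iff n (negc a (negc b x)) (negc (coconc a b) x))"
proof -
  assume n: "1 \<le> n" and a: "chain_over n a" and b: "chain_over n b" and x: "wf n x"
  show ?thesis
  proof (cases "a = {} \<or> b = {}")
    case True
    thus ?thesis
    proof
      assume "a = {}" thus ?thesis using iff_refl[OF n wf_negc[OF b x]] by (simp add: negc_def)
    next
      assume "b = {}" thus ?thesis using iff_refl[OF n wf_negc[OF a x]] by (simp add: negc_def)
    qed
  next
    case False
    thus ?thesis using A5[OF x a _ b] by (auto simp: negc_def)
  qed
qed

lemma R3: "1 \<le> n \<Longrightarrow> chain_over n a \<Longrightarrow> a \<noteq> {} \<Longrightarrow> prov n (iff n (Neg a (Y n)) (Bot a))"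
proof -
  assume n: "1 \<le> n" and a: "chain_over n a" "a \<noteq> {}"
  let ?f = "full_chain n"
  have 1: "prov n (iff n (Neg a (Neg ?f (Bot ?f))) (negc (coconc a ?f) (Bot ?f)))"
    by (rule A5) (use a n in auto)
  show ?thesis
  proof (cases "a = ?f")
    case True thus ?thesis using 1 by (simp add: negc_def)
  next
    case False
    hence ne: "coconc a ?f \<noteq> {}" by (simp add: coconc_empty)
    have 2: "prov n (iff n (Neg (coconc a ?f) (Bot ?f)) (botc (coconc (coconc a ?f) ?f)))"
      by (rule A6) (use a n ne co_coconc in auto)
    show ?thesis using iff_trans[OF n 1] 2 ne a by (simp add: negc_def botc_def coconc_cancel)
  qed
qed

lemma main: "prov (Suc n) f \<Longrightarrow> 1 \<le> n \<Longrightarrow> prov n (tr n f)"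
proof (induction rule: prov.induct)
  case (A1 f g) thus ?case by (auto intro!: prov.A1 tr_wf)
next
  case (A2 f g h) thus ?case by (auto intro!: prov.A2 tr_wf)
next
  case (A3 f g) thus ?case by (auto simp: negc_full intro!: prov.A3 tr_wf)
next
  case (A4 f ck)
  show ?case
  proof (cases "ck - {Suc n} = {}")
    case True
    have "wf n (tr n f)" using A4 tr_wf by auto
    thus ?thesis using True A4 by (auto simp: negc_def intro!: prov.A1)
  next
    case False
    thus ?thesis using A4 by (auto simp: negc_def co_diff intro!: prov.A4 tr_wf)
  qed
next
  case (A5 f ck cr)
  thus ?case by (auto simp: tr_iff tr_negc coconc_diff co_diff intro!: A5' tr_wf)
next
  case (A6 ck cr)
  define a where "a = ck - {Suc n}"
  define b where "b = cr - {Suc n}"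
  have a: "chain_over n a" and b: "chain_over n b" using A6 co_diff a_def b_def by auto
  have n: "1 \<le> n" by fact
  have nY: "prov n (Y n)" using not_bot[OF n] .
  have tl: "tr n (Neg ck (Bot cr)) = negc a (if b = {} then Y n else Bot b)"
    by (simp add: a_def b_def)
  have tb: "tr n (botc (coconc ck cr)) = (if ck = cr then Top else if coconc a b = {} then Y n else Bot (coconc a b))"
    by (simp add: tr_botc coconc_empty a_def b_def coconc_diff)
  have "prov n (iff n (negc a (if b = {} then Y n else Bot b))
     (if ck = cr then Top else if coconc a b = {} then Y n else Bot (coconc a b)))"
  proof (cases "ck = cr")
    case True
    hence ab: "a = b" by (simp add: a_def b_def)
    show ?thesis
    proof (cases "a = {}")
      case True
      have "prov n (iff n (Y n) (botc (coconc (full_chain n) (full_chain n))))"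
        by (rule prov.A6) (use n in auto)
      thus ?thesis using True ab \<open>ck = cr\<close> by (simp add: negc_def botc_def)
    next
      case False
      have "prov n (iff n (Neg a (Bot a)) (botc (coconc a a)))"
        by (rule prov.A6) (use a False in auto)
      thus ?thesis using False ab \<open>ck = cr\<close> by (simp add: negc_def botc_def)
    qed
  next
    case False
    show ?thesis
    proof (cases "a = b")
      case True
      have "a \<noteq> {}"
      proof
        assume "a = {}"
        hence "ck = {Suc n}" "cr = {Suc n}" using A6 True a_def b_def by auto
        thus False using False by simp
      qed
      thus ?thesis using True False iff_prov[OF n neg_bot_self[OF n a] nY]
        by (simp add: negc_def coconc_empty)
    next
      case ne: False
      hence ne': "coconc a b \<noteq> {}" by (simp add: coconc_empty)
      show ?thesis
      proof (cases "a = {}")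
        case True
        thus ?thesis using ne' False iff_refl[OF n] b by (simp add: negc_def)
      next
        case anz: False
        show ?thesis
        proof (cases "b = {}")
          case True
          thus ?thesis using anz False R3[OF n a anz] by (simp add: negc_def)
        next
          case bnz: False
          have "prov n (iff n (Neg a (Bot b)) (botc (coconc a b)))"
            by (rule prov.A6) (use a b anz bnz in auto)
          thus ?thesis using anz bnz False ne' by (simp add: negc_def botc_def)
        qed
      qed
    qed
  qed
  thus ?case using tr_iff[OF n] tl tb by simp
next
  case (A7 ck cr)
  show ?case
  proof (cases "cr - {Suc n} = {}")
    case True
    have "wf (Suc n) (Bot ck)" using A7 by auto
    hence "wf n (tr n (Bot ck))" using A7(6) tr_wf by blast
    hence "prov n (Imp (tr n (Bot ck)) (Y n))"
      using MP[OF prov.A1 not_bot[OF A7(6)]] A7(6) by simp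
    thus ?thesis using True by simp
  next
    case False
    hence "ck - {Suc n} \<noteq> {}" using A7 by auto
    moreover have "chain_over n (ck - {Suc n})" "chain_over n (cr - {Suc n})" using A7 co_diff by auto
    ultimately show ?thesis using False A7 by (auto intro!: prov.A7)
  qed
next
  case (MP f g) thus ?case by (auto intro: prov.MP)
qed

theorem mainTheorem16:
  fixes n :: nat and \<phi> :: form
  assumes "n \<ge> 1" and "wf n \<phi>" and "prov (n + 1) (embed \<phi>)"
  shows "prov n \<phi>"
proof -
  have "prov n (tr n \<phi>)" using main assms by (simp add: embed_def)
  thus ?thesis using tr_id[OF assms(2)] by simp
qed

end
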